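(* Consider the mini-batch method described in the context, and suppose Assumptions A1 and A3 hold. Let $A=8L^2+16cL^2$ and $B=8c+8$ with $c$ from A3, and $z_i(k)=\Pi_{\mathcal{X}}[v_i(k)]$. Then almost surely, for any $\check x\in\mathcal{X}$, all $i\in V$ and all $k\ge0$, $$\mathsf{E}\big[\|x_i(k+1)-\check x\|^2\mid\tilde{\mathcal F}_k\big]\le(1+A\alpha_k^2)\|v_i(k)-\check x\|^2-2\alpha_k\big(f_i(z_i(k))-f_i(\check x)\big)-\Big(\tfrac{3}{8c}-2\alpha_kL\Big)\mathrm{dist}^2(v_i(k),\mathcal{X})+B\alpha_k^2G_f^2.$$
   Context: Setting. There are $m$ agents $V=\{1,\dots,m\}$. Agent $i$ has $f_i:\mathbb{R}^d\to\mathbb{R}$ and $\mathcal{X}_i=\bigcap_{j\in I_i}\mathcal{X}_i^j$, with $I_1,\dots,I_m$ a partition of a finite index set; $\mathcal{X}=\bigcap_i\mathcal{X}_i$ (nonempty). $\Pi_Y$ is Euclidean projection onto closed convex $Y$, $\mathrm{dist}(x,Y)=\min_{v\in Y}\|x-v\|$. With weight matrices $W(k)$, stepsizes $\alpha_k>0$ and batch size $b\ge1$, the mini-batch method starts from (possibly random) $x_i(0)$ and for $k\ge0$ sets $v_i(k)=\sum_j[W(k)]_{ij}x_j(k)$, $\psi_i^0(k)=v_i(k)-\alpha_k\nabla f_i(v_i(k))$, $\psi_i^r(k)=\Pi_{\mathcal{X}_i^{\Omega_i^r(k)}}[\psi_i^{r-1}(k)]$ for $r=1,\dots,b$, $x_i(k+1)=\psi_i^b(k)$.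 Here $\Omega_i^1(k),\dots,\Omega_i^b(k)$ are mutually independent samples, independent of the past, of a random variable $\Omega_i(k)$ with values in $I_i$ (with a fixed distribution over $k$). $\tilde{\mathcal F}_k$ is the $\sigma$-algebra generated by $\{x_i(0):i\in V\}$ and $\{\Omega_i^r(\ell):0\le\ell\le k-1,1\le r\le b,i\in V\}$ (with $\tilde{\mathcal F}_0$ generated by the initial points). (A1) Each $\mathcal{X}_i^j$ closed convex; each $f_i$ convex, differentiable, $L$-Lipschitz gradient; $\|\nabla f_i(x)\|\le G_f$ for $x\in\mathcal{X}$. (A3) There is $c>0$ with $\mathrm{dist}^2(x,\mathcal{X})\le c\,\mathsf{E}[\mathrm{dist}^2(x,\mathcal{X}_i^{\Omega_i(k)})]$ for all $i\in V$, $x\in\mathbb{R}^d$. *)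

theory Defs
  imports "HOL-Analysis.Analysis" "HOL-Probability.Probability"
begin

primrec batch_proj :: "(nat \<Rightarrow> 'a::euclidean_space set) \<Rightarrow> (nat \<Rightarrow> nat) \<Rightarrow> nat \<Rightarrow> 'a \<Rightarrow> 'a" where
  "batch_proj Xc w 0 y = y"
| "batch_proj Xc w (Suc r) y = closest_point (Xc (w (Suc r))) (batch_proj Xc w r y)"

text \<open>The sigma-algebra tilde F_k generated by the initial points x_i(0) (i in V)
  and the samples Omega_i^r(l), l < k, 1 <= r <= b, i in V.  Agents are V = {0..<m}.\<close>
definition Ftil :: "'b measure \<Rightarrow> nat \<Rightarrow> nat \<Rightarrow> (nat \<Rightarrow> 'b \<Rightarrow> 'a::euclidean_space)
    \<Rightarrow> (nat \<Rightarrow> nat \<Rightarrow> nat \<Rightarrow> 'b \<Rightarrow> nat) \<Rightarrow> nat \<Rightarrow> 'b measure" where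
  "Ftil M m b x0 Om k = sigma (space M)
     ((\<Union>i\<in>{..<m}. {x0 i -` A \<inter> space M | A. A \<in> sets borel})
      \<union> (\<Union>i\<in>{..<m}. \<Union>l\<in>{..<k}. \<Union>r\<in>{1..b}. {Om i l r -` A \<inter> space M | A. True}))"

end

theory Submission
  imports Defs
begin


lemma infdist_closest:
  fixes a :: "'a::euclidean_space"
  assumes "closed S" "S \<noteq> {}"
  shows "infdist a S = norm (a - closest_point S a)"
  using setdist_closest_point[OF assms] by (simp add: infdist_eq_setdist dist_norm)

lemma proj_pyth:
  fixes a xc :: "'a::euclidean_space"
  assumes "convex S" "closed S" "xc \<in> S"
  shows "(norm (closest_point S a - xc))\<^sup>2 \<le> (norm (a - xc))\<^sup>2 - (infdist a S)\<^sup>2"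
proof -
  define p where "p = closest_point S a"
  have d: "inner (a - p) (xc - p) \<le> 0" unfolding p_def using closest_point_dot[OF assms] .
  have id: "infdist a S = norm (a - p)" unfolding p_def using infdist_closest[OF assms(2)] assms(3) by auto
  have gen: "(norm (u + w))\<^sup>2 = (norm u)\<^sup>2 + (norm w)\<^sup>2 + 2 * inner u w" for u w :: 'a
    by (simp add: power2_norm_eq_inner inner_add_left inner_add_right inner_commute)
  have e: "(norm (a - xc))\<^sup>2 = (norm (a - p))\<^sup>2 + (norm (p - xc))\<^sup>2 + 2 * inner (a - p) (p - xc)"
    using gen[of "a - p" "p - xc"] by simp
  have "inner (a - p) (p - xc) = - inner (a - p) (xc - p)"
    by (metis inner_minus_right minus_diff_eq)
  have "(infdist a S)\<^sup>2 = (norm (a - p))\<^sup>2" using id by simp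
  then show ?thesis using d e \<open>inner (a - p) (p - xc) = - inner (a - p) (xc - p)\<close> unfolding p_def[symmetric] by linarith
qed

lemma proj_nonexp:
  fixes a xc :: "'a::euclidean_space"
  assumes "convex S" "closed S" "xc \<in> S"
  shows "norm (closest_point S a - xc) \<le> norm (a - xc)"
proof -
  have "(norm (closest_point S a - xc))\<^sup>2 \<le> (norm (a - xc))\<^sup>2"
    using proj_pyth[OF assms, of a] zero_le_power2[of "infdist a S"] by linarith
  then show ?thesis by (rule power2_le_imp_le) simp
qed

lemma batch_proj_le:
  fixes y xc :: "'a::euclidean_space"
  assumes "\<And>s. s \<in> {1..r} \<Longrightarrow> convex (Xc (w s)) \<and> closed (Xc (w s)) \<and> xc \<in> Xc (w s)"
  shows "norm (batch_proj Xc w r y - xc) \<le> norm (y - xc)"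
  using assms
proof (induction r)
  case 0 then show ?case by simp
next
  case (Suc r)
  have h: "convex (Xc (w (Suc r))) \<and> closed (Xc (w (Suc r))) \<and> xc \<in> Xc (w (Suc r))" using Suc.prems by auto
  have "norm (batch_proj Xc w (Suc r) y - xc) \<le> norm (batch_proj Xc w r y - xc)"
    using proj_nonexp[of "Xc (w (Suc r))" xc] h by simp
  also have "\<dots> \<le> norm (y - xc)" using Suc by auto
  finally show ?case .
qed

lemma batch_bound:
  fixes y xc :: "'a::euclidean_space"
  assumes "r \<ge> 1" "\<And>s. s \<in> {1..r} \<Longrightarrow> convex (Xc (w s)) \<and> closed (Xc (w s)) \<and> xc \<in> Xc (w s)"
  shows "(norm (batch_proj Xc w r y - xc))\<^sup>2 \<le> (norm (y - xc))\<^sup>2 - (infdist y (Xc (w 1)))\<^sup>2"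
  using assms
proof (induction r rule: dec_induct)
  case base
  have h: "convex (Xc (w 1)) \<and> closed (Xc (w 1)) \<and> xc \<in> Xc (w 1)" using base by auto
  then show ?case using proj_pyth[of "Xc (w 1)" xc y] by simp
next
  case (step r)
  have h: "convex (Xc (w (Suc r))) \<and> closed (Xc (w (Suc r))) \<and> xc \<in> Xc (w (Suc r))" using step.prems by auto
  have "norm (batch_proj Xc w (Suc r) y - xc) \<le> norm (batch_proj Xc w r y - xc)"
    using proj_nonexp[of "Xc (w (Suc r))" xc] h by simp
  then have "(norm (batch_proj Xc w (Suc r) y - xc))\<^sup>2 \<le> (norm (batch_proj Xc w r y - xc))\<^sup>2"
    by (simp add: power_mono)
  also have "\<dots> \<le> (norm (y - xc))\<^sup>2 - (infdist y (Xc (w 1)))\<^sup>2" using step by auto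
  finally show ?case .
qed

lemma grad_ineq:
  fixes f :: "'a::euclidean_space \<Rightarrow> real"
  assumes cv: "convex_on UNIV f" and d: "\<And>y. (f has_derivative (\<lambda>h. g y \<bullet> h)) (at y)"
  shows "f w \<ge> f u + g u \<bullet> (w - u)"
proof -
  define h where "h = w - u"
  define \<phi> where "\<phi> = (\<lambda>t::real. f (u + t *\<^sub>R h))"
  have cphi: "convex_on UNIV \<phi>"
    unfolding \<phi>_def
  proof (rule convex_onI)
    fix t x y :: real assume t: "0 < t" "t < 1"
    show "f (u + ((1 - t) *\<^sub>R x + t *\<^sub>R y) *\<^sub>R h) \<le> (1 - t) * f (u + x *\<^sub>R h) + t * f (u + y *\<^sub>R h)"
    proof -
    have "u + ((1 - t) * x + t * y) *\<^sub>R h = (1 - t) *\<^sub>R (u + x *\<^sub>R h) + t *\<^sub>R (u + y *\<^sub>R h)"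
      by (simp add: algebra_simps)
    then show ?thesis
      using convex_onD[OF cv, of t "u + x *\<^sub>R h" "u + y *\<^sub>R h"] t by simp
    qed
  qed simp
  have "((\<lambda>t::real. u + t *\<^sub>R h) has_derivative (\<lambda>t. t *\<^sub>R h)) (at 0)"
    by (auto intro!: derivative_eq_intros)
  from has_derivative_compose[OF this d[of "u + 0 *\<^sub>R h"]]
  have "(\<phi> has_derivative (\<lambda>t. g u \<bullet> (t *\<^sub>R h))) (at 0)" unfolding \<phi>_def by (simp add: o_def)
  then have "(\<phi> has_derivative (\<lambda>t. t * (g u \<bullet> h))) (at 0)" by simp
  moreover have "(\<lambda>t. t * (g u \<bullet> h)) = (*) (g u \<bullet> h)" by (rule ext) simp
  ultimately have "(\<phi> has_derivative (*) (g u \<bullet> h)) (at 0)" by metis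
  then have "(\<phi> has_field_derivative (g u \<bullet> h)) (at 0 within UNIV)"
    by (simp add: has_field_derivative_def)
  from convex_on_imp_above_tangent[OF cphi _ _ _ this, of 1]
  have "\<phi> 1 - \<phi> 0 \<ge> (g u \<bullet> h) * (1 - 0)" by auto
  then show ?thesis unfolding \<phi>_def h_def by simp
qed



lemma det_bound:
  fixes Y2 D d dy n fz fx \<alpha> G L c :: real
  assumes h1: "Y2 \<le> D\<^sup>2 - 2*\<alpha>*(fz - fx) + 2*\<alpha>*G*d + \<alpha>\<^sup>2*n\<^sup>2"
   and hn: "n \<le> G + L*d" and n0: "0 \<le> n" and d0: "0 \<le> d" and dD: "d \<le> D" and ddy: "d \<le> dy + \<alpha>*n"
   and dy0: "0 \<le> dy" and a0: "\<alpha> > 0" and c0: "c > 0" and L0: "L \<ge> 0" and G0: "G \<ge> 0"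
   and cs: "c \<ge> 1 \<or> (d = 0 \<and> dy = 0)"
  shows "Y2 - dy\<^sup>2/c \<le> (1 + (8*L\<^sup>2+16*c*L\<^sup>2)*\<alpha>\<^sup>2)*D\<^sup>2 - 2*\<alpha>*(fz - fx)
          - (3/(8*c) - 2*\<alpha>*L)*d\<^sup>2 + (8*c+8)*\<alpha>\<^sup>2*G\<^sup>2"
proof -
  have aLd: "0 \<le> \<alpha>*L*d\<^sup>2" using a0 L0 by simp
  have LD: "\<alpha>\<^sup>2*L\<^sup>2*D\<^sup>2 \<ge> 0" "c*\<alpha>\<^sup>2*L\<^sup>2*D\<^sup>2 \<ge> 0" "\<alpha>\<^sup>2*G\<^sup>2 \<ge> 0" "c*\<alpha>\<^sup>2*G\<^sup>2 \<ge> 0" using c0 by auto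
  have expand: "(1 + (8*L\<^sup>2+16*c*L\<^sup>2)*\<alpha>\<^sup>2)*D\<^sup>2 - 2*\<alpha>*(fz - fx)
          - (3/(8*c) - 2*\<alpha>*L)*d\<^sup>2 + (8*c+8)*\<alpha>\<^sup>2*G\<^sup>2
       = D\<^sup>2 + 8*(\<alpha>\<^sup>2*L\<^sup>2*D\<^sup>2) + 16*(c*\<alpha>\<^sup>2*L\<^sup>2*D\<^sup>2) - 2*\<alpha>*(fz - fx) - (3/8)*(d\<^sup>2/c)
         + 2*(\<alpha>*L*d\<^sup>2) + 8*(c*\<alpha>\<^sup>2*G\<^sup>2) + 8*(\<alpha>\<^sup>2*G\<^sup>2)"
    by (simp add: algebra_simps)
  show ?thesis
  proof (cases "c \<ge> 1")
    case True
    have "d\<^sup>2 \<le> (dy + \<alpha>*n)\<^sup>2" using d0 ddy by (simp add: power_mono)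
    also have "\<dots> \<le> 2*dy\<^sup>2 + 2*(\<alpha>\<^sup>2*n\<^sup>2)"
    proof -
      have "(dy + \<alpha>*n)\<^sup>2 + (dy - \<alpha>*n)\<^sup>2 = 2*dy\<^sup>2 + 2*(\<alpha>\<^sup>2*n\<^sup>2)"
        by (simp add: power2_eq_square algebra_simps)
      moreover have "(dy - \<alpha>*n)\<^sup>2 \<ge> 0" by simp
      ultimately show ?thesis by linarith
    qed
    finally have s1: "d\<^sup>2 \<le> 2*dy\<^sup>2 + 2*(\<alpha>\<^sup>2*n\<^sup>2)" .
    have s2: "d\<^sup>2/c \<le> 2*(dy\<^sup>2/c) + 2*(\<alpha>\<^sup>2*n\<^sup>2/c)"
      using divide_right_mono[OF s1, of c] c0 by (simp add: add_divide_distrib)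
    have "0 \<le> (d - 8*c*\<alpha>*G)\<^sup>2" by simp
    hence "16*c*\<alpha>*G*d \<le> d\<^sup>2 + 64*c\<^sup>2*\<alpha>\<^sup>2*G\<^sup>2" by (simp add: power2_eq_square algebra_simps)
    hence "(16*c*\<alpha>*G*d)/(8*c) \<le> (d\<^sup>2 + 64*c\<^sup>2*\<alpha>\<^sup>2*G\<^sup>2)/(8*c)" by (rule divide_right_mono) (use c0 in simp)
    moreover have "(1/8)*(d\<^sup>2/c) + 8*(c*\<alpha>\<^sup>2*G\<^sup>2) = (d\<^sup>2 + 64*c\<^sup>2*\<alpha>\<^sup>2*G\<^sup>2)/(8*c)"
      using c0 by (simp add: field_simps power2_eq_square)
    moreover have "2*\<alpha>*G*d = (16*c*\<alpha>*G*d)/(8*c)" using c0 by simp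
    ultimately have s3: "2*\<alpha>*G*d \<le> (1/8)*(d\<^sup>2/c) + 8*(c*\<alpha>\<^sup>2*G\<^sup>2)" by linarith
    have s4: "\<alpha>\<^sup>2*n\<^sup>2/c \<le> \<alpha>\<^sup>2*n\<^sup>2"
    proof -
      have x0: "0 \<le> \<alpha>\<^sup>2*n\<^sup>2" by simp
      have "\<alpha>\<^sup>2*n\<^sup>2 \<le> \<alpha>\<^sup>2*n\<^sup>2 * c" using mult_left_mono[OF True x0] by simp
      then show ?thesis using c0 by (simp add: divide_le_eq)
    qed
    have "n\<^sup>2 \<le> (G + L*d)\<^sup>2" using n0 hn by (simp add: power_mono)
    also have "\<dots> \<le> 2*G\<^sup>2 + 2*(L\<^sup>2*d\<^sup>2)"
    proof -
      have "(G + L*d)\<^sup>2 + (G - L*d)\<^sup>2 = 2*G\<^sup>2 + 2*(L\<^sup>2*d\<^sup>2)"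
        by (simp add: power2_eq_square algebra_simps)
      moreover have "(G - L*d)\<^sup>2 \<ge> 0" by simp
      ultimately show ?thesis by linarith
    qed
    also have "\<dots> \<le> 2*G\<^sup>2 + 2*(L\<^sup>2*D\<^sup>2)"
    proof -
      have "d\<^sup>2 \<le> D\<^sup>2" using d0 dD by (simp add: power_mono)
      then show ?thesis by (simp add: mult_left_mono)
    qed
    finally have "n\<^sup>2 \<le> 2*G\<^sup>2 + 2*(L\<^sup>2*D\<^sup>2)" .
    hence s5: "\<alpha>\<^sup>2*n\<^sup>2 \<le> 2*(\<alpha>\<^sup>2*G\<^sup>2) + 2*(\<alpha>\<^sup>2*L\<^sup>2*D\<^sup>2)"
    proof -
      have "\<alpha>\<^sup>2*n\<^sup>2 \<le> \<alpha>\<^sup>2*(2*G\<^sup>2 + 2*(L\<^sup>2*D\<^sup>2))"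
        using \<open>n\<^sup>2 \<le> 2*G\<^sup>2 + 2*(L\<^sup>2*D\<^sup>2)\<close> by (simp add: mult_left_mono)
      then show ?thesis by (simp add: algebra_simps)
    qed
    show ?thesis unfolding expand using h1 s2 s3 s4 s5 aLd LD by linarith
  next
    case False
    then have dd: "d = 0" "dy = 0" using cs by auto
    have "n \<le> G" using hn dd by simp
    hence "\<alpha>\<^sup>2*n\<^sup>2 \<le> \<alpha>\<^sup>2*G\<^sup>2" using n0 by (simp add: mult_left_mono power_mono)
    then have Y: "Y2 \<le> D\<^sup>2 - 2*\<alpha>*(fz - fx) + \<alpha>\<^sup>2*G\<^sup>2" using h1 dd by simp
    have z1: "Y2 - dy\<^sup>2/c = Y2" using dd by simp
    have z2: "(3/8)*(d\<^sup>2/c) = 0" "\<alpha>*L*d\<^sup>2 = 0" using dd by simp_all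
    show ?thesis unfolding expand z1 using Y z2 LD by linarith
  qed
qed


definition Gtil :: "'b measure \<Rightarrow> nat \<Rightarrow> nat \<Rightarrow> (nat \<Rightarrow> 'b \<Rightarrow> 'a::euclidean_space)
    \<Rightarrow> (nat \<Rightarrow> nat \<Rightarrow> nat \<Rightarrow> 'b \<Rightarrow> nat) \<Rightarrow> nat \<Rightarrow> 'b set set" where
  "Gtil M m b x0 Om k = ((\<Union>i\<in>{..<m}. {x0 i -` A \<inter> space M | A. A \<in> sets borel})
      \<union> (\<Union>i\<in>{..<m}. \<Union>l\<in>{..<k}. \<Union>r\<in>{1..b}. {Om i l r -` A \<inter> space M | A. True}))"

lemma Gtil_Pow: "Gtil M m b x0 Om k \<subseteq> Pow (space M)"
  unfolding Gtil_def by auto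

lemma Ftil_eq: "Ftil M m b x0 Om k = sigma (space M) (Gtil M m b x0 Om k)"
  unfolding Ftil_def Gtil_def by simp

lemma sets_Ftil: "sets (Ftil M m b x0 Om k) = sigma_sets (space M) (Gtil M m b x0 Om k)"
  unfolding Ftil_eq using sets_measure_of[OF Gtil_Pow] .

lemma space_Ftil: "space (Ftil M m b x0 Om k) = space M"
  unfolding Ftil_eq using space_measure_of[OF Gtil_Pow] .

lemma Gtil_mono: "k \<le> k' \<Longrightarrow> Gtil M m b x0 Om k \<subseteq> Gtil M m b x0 Om k'"
  unfolding Gtil_def
  apply (rule Un_mono)
   apply (rule order_refl)
  apply (rule UN_mono, simp)
  apply (rule UN_mono)
  by auto

lemma Ftil_props:
  fixes x0 :: "nat \<Rightarrow> 'b \<Rightarrow> 'a::euclidean_space"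
  assumes x0m: "\<forall>i<m. x0 i \<in> borel_measurable M"
    and Omm: "\<forall>i<m. \<forall>k. \<forall>r\<in>{1..b}. Om i k r \<in> measurable M (count_space UNIV)"
  shows Ftil_sub: "subalgebra M (Ftil M m b x0 Om k)"
    and Ftil_nest: "k \<le> k' \<Longrightarrow> subalgebra (Ftil M m b x0 Om k') (Ftil M m b x0 Om k)"
    and Ftil_x0: "i < m \<Longrightarrow> x0 i \<in> borel_measurable (Ftil M m b x0 Om k)"
    and Ftil_Om: "i < m \<Longrightarrow> l < k \<Longrightarrow> r \<in> {1..b} \<Longrightarrow> Om i l r \<in> measurable (Ftil M m b x0 Om k) (count_space UNIV)"
proof -
  have G: "Gtil M m b x0 Om k \<subseteq> sets M"
  proof
    fix S assume "S \<in> Gtil M m b x0 Om k"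
    then show "S \<in> sets M" unfolding Gtil_def
    proof (elim UnE UN_E CollectE exE conjE)
      fix i A assume "i \<in> {..<m}" "S = x0 i -` A \<inter> space M" "A \<in> sets borel"
      then show ?thesis using x0m measurable_sets by blast
    next
      fix i l r A assume "i \<in> {..<m}" "r \<in> {1..b}" "S = Om i l r -` A \<inter> space M"
      then show ?thesis using Omm measurable_sets[of "Om i l r" M "count_space UNIV" A] by auto
    qed
  qed
  show "subalgebra M (Ftil M m b x0 Om k)"
    unfolding subalgebra_def sets_Ftil space_Ftil using sets.sigma_sets_subset[OF G] by simp
  show "k \<le> k' \<Longrightarrow> subalgebra (Ftil M m b x0 Om k') (Ftil M m b x0 Om k)"
    unfolding subalgebra_def sets_Ftil space_Ftil by (simp add: Gtil_mono sigma_sets_mono')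
  show "i < m \<Longrightarrow> x0 i \<in> borel_measurable (Ftil M m b x0 Om k)"
  proof (rule measurableI)
    fix A :: "'a set" assume "i < m" "A \<in> sets borel"
    then have "x0 i -` A \<inter> space M \<in> Gtil M m b x0 Om k" unfolding Gtil_def by blast
    then show "x0 i -` A \<inter> space (Ftil M m b x0 Om k) \<in> sets (Ftil M m b x0 Om k)"
      unfolding sets_Ftil space_Ftil by auto
  qed simp
  show "i < m \<Longrightarrow> l < k \<Longrightarrow> r \<in> {1..b} \<Longrightarrow> Om i l r \<in> measurable (Ftil M m b x0 Om k) (count_space UNIV)"
  proof (rule measurableI)
    fix A :: "nat set" assume "i < m" "l < k" "r \<in> {1..b}"
    then have "Om i l r -` A \<inter> space M \<in> Gtil M m b x0 Om k" unfolding Gtil_def by blast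
    then show "Om i l r -` A \<inter> space (Ftil M m b x0 Om k) \<in> sets (Ftil M m b x0 Om k)"
      unfolding sets_Ftil space_Ftil by auto
  qed simp
qed

lemma batch_proj_meas:
  fixes z :: "'b \<Rightarrow> 'a::euclidean_space"
  assumes cc: "\<forall>n\<in>Ic. convex (Xc n) \<and> closed (Xc n) \<and> Xc n \<noteq> {}"
    and wm: "\<forall>r\<in>{1..b}. w r \<in> measurable N (count_space UNIV)"
    and wr: "\<forall>r\<in>{1..b}. \<forall>\<omega>\<in>space N. w r \<omega> \<in> Ic"
    and zm: "z \<in> borel_measurable N"
  shows "b' \<le> b \<Longrightarrow> (\<lambda>\<omega>. batch_proj Xc (\<lambda>r. w r \<omega>) b' (z \<omega>)) \<in> borel_measurable N"
proof (induction b')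
  case 0 then show ?case using zm by simp
next
  case (Suc r)
  define P where "P = (\<lambda>\<omega>. batch_proj Xc (\<lambda>r. w r \<omega>) r (z \<omega>))"
  have Pm: "P \<in> borel_measurable N" using Suc unfolding P_def by simp
  define h where "h = (\<lambda>n \<omega>. if n \<in> Ic then closest_point (Xc n) (P \<omega>) else P \<omega>)"
  have hm: "h n \<in> borel_measurable N" for n
  proof (cases "n \<in> Ic")
    case True
    then have "continuous_on UNIV (closest_point (Xc n))" using cc continuous_on_closest_point by blast
    then have "closest_point (Xc n) \<in> borel_measurable borel" by (rule borel_measurable_continuous_onI)
    from measurable_compose[OF Pm this] True show ?thesis unfolding h_def by (simp add: o_def)
  next
    case False then show ?thesis unfolding h_def using Pm by simp
  qed
  have "(\<lambda>\<omega>. h (w (Suc r) \<omega>) \<omega>) \<in> borel_measurable N"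
    by (rule measurable_compose_countable[OF hm]) (use wm Suc.prems in auto)
  moreover have "\<omega> \<in> space N \<Longrightarrow> h (w (Suc r) \<omega>) \<omega> = batch_proj Xc (\<lambda>r. w r \<omega>) (Suc r) (z \<omega>)" for \<omega>
    using wr Suc.prems unfolding h_def P_def by auto
  ultimately show ?case using measurable_cong by (smt (verit) measurable_cong)
qed

context sigma_finite_subalgebra
begin

lemma nn_cond_exp_sum_fin:
  assumes "finite J" "\<And>j. j \<in> J \<Longrightarrow> h j \<in> borel_measurable M"
  shows "AE \<omega> in M. nn_cond_exp M F (\<lambda>\<omega>. \<Sum>j\<in>J. h j \<omega>) \<omega> = (\<Sum>j\<in>J. nn_cond_exp M F (h j) \<omega>)"
  using assms
proof (induction J rule: finite_induct)
  case empty
  have "AE \<omega> in M. (\<lambda>_. 0::ennreal) \<omega> = nn_cond_exp M F (\<lambda>_. 0) \<omega>"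
    by (rule nn_cond_exp_F_meas) simp
  then show ?case by auto
next
  case (insert a J)
  have m1: "h a \<in> borel_measurable M" using insert by simp
  have m2: "(\<lambda>\<omega>. \<Sum>j\<in>J. h j \<omega>) \<in> borel_measurable M" using insert by simp
  have "AE \<omega> in M. nn_cond_exp M F (h a) \<omega> + nn_cond_exp M F (\<lambda>\<omega>. \<Sum>j\<in>J. h j \<omega>) \<omega>
        = nn_cond_exp M F (\<lambda>\<omega>. h a \<omega> + (\<Sum>j\<in>J. h j \<omega>)) \<omega>"
    by (rule nn_cond_exp_sum[OF m1 m2])
  moreover have "AE \<omega> in M. nn_cond_exp M F (\<lambda>\<omega>. \<Sum>j\<in>J. h j \<omega>) \<omega> = (\<Sum>j\<in>J. nn_cond_exp M F (h j) \<omega>)"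
    using insert by simp
  ultimately show ?case using insert.hyps by auto
qed

end

lemma nn_cond_exp_indep_ind:
  assumes P: "prob_space M" and S: "subalgebra M F" and E: "E \<in> sets M"
    and ind: "\<forall>A\<in>sets F. measure M (A \<inter> E) = measure M A * measure M E"
  shows "AE \<omega> in M. nn_cond_exp M F (indicator E) \<omega> = ennreal (measure M E)"
proof -
  interpret prob_space M by (rule P)
  interpret finite_measure_subalgebra M F by unfold_locales (rule S)
  have "AE \<omega> in M. (\<lambda>_. ennreal (measure M E)) \<omega> = nn_cond_exp M F (indicator E) \<omega>"
  proof (rule nn_cond_exp_charact)
    fix A assume A: "A \<in> sets F"
    then have AM: "A \<in> sets M" using S unfolding subalgebra_def by auto
    have "(\<integral>\<^sup>+ x \<in> A. indicator E x \<partial>M) = (\<integral>\<^sup>+ x. indicator (A \<inter> E) x \<partial>M)"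
      by (rule nn_integral_cong) (simp add: indicator_inter_arith mult.commute)
    also have "\<dots> = emeasure M (A \<inter> E)" using AM E by simp
    also have "\<dots> = ennreal (measure M A * measure M E)" using ind A by (simp add: emeasure_eq_measure)
    also have "\<dots> = ennreal (measure M E) * emeasure M A"
      by (simp add: emeasure_eq_measure ennreal_mult' mult.commute)
    also have "\<dots> = (\<integral>\<^sup>+ x \<in> A. ennreal (measure M E) \<partial>M)"
      using AM by (simp add: nn_integral_cmult_indicator)
    finally show "(\<integral>\<^sup>+ x \<in> A. indicator E x \<partial>M) = (\<integral>\<^sup>+ x \<in> A. ennreal (measure M E) \<partial>M)" .
  qed (use E in auto)
  then show ?thesis by auto
qed



lemma enn_aux:
  fixes a :: ennreal
  assumes "a + ennreal T \<le> ennreal P" "0 \<le> T" "0 \<le> P"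
  shows "enn2real a \<le> P - T"
proof -
  have "a \<noteq> \<top>"
  proof
    assume "a = \<top>"
    then show False using assms(1) by (simp add: top_unique)
  qed
  then obtain r where r: "a = ennreal r" "0 \<le> r" by (cases a) auto
  have "ennreal (r + T) \<le> ennreal P" using assms(1,2) r by (simp add: ennreal_plus)
  then have "r + T \<le> P" using assms(3) by (simp add: ennreal_le_iff)
  then show ?thesis using r by simp
qed

lemma det_vec:
  fixes v xc :: "'a::euclidean_space" and f :: "'a \<Rightarrow> real" and g :: "'a \<Rightarrow> 'a"
  assumes cv: "convex_on UNIV f" and gd: "\<forall>y. (f has_derivative (\<lambda>h. g y \<bullet> h)) (at y)"
    and lip: "\<forall>y z. norm (g y - g z) \<le> L * norm (y - z)"
    and bd: "\<forall>y\<in>X. norm (g y) \<le> G"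
    and X: "closed X" "X \<noteq> {}" and xc: "xc \<in> X"
    and a0: "\<alpha> > 0" and c0: "c > 0" and L0: "L \<ge> 0" and G0: "G \<ge> 0"
    and cs: "c \<ge> 1 \<or> (\<forall>u. infdist u X = 0)"
  shows "(norm (v - \<alpha> *\<^sub>R g v - xc))\<^sup>2 - (infdist (v - \<alpha> *\<^sub>R g v) X)\<^sup>2 / c
    \<le> (1 + (8*L\<^sup>2+16*c*L\<^sup>2)*\<alpha>\<^sup>2)*(norm (v - xc))\<^sup>2 - 2*\<alpha>*(f (closest_point X v) - f xc)
       - (3/(8*c) - 2*\<alpha>*L)*(infdist v X)\<^sup>2 + (8*c+8)*\<alpha>\<^sup>2*G\<^sup>2"
proof -
  define z where "z = closest_point X v"
  define y where "y = v - \<alpha> *\<^sub>R g v"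
  have zX: "z \<in> X" unfolding z_def using closest_point_in_set[OF X] .
  have dz: "infdist v X = norm (v - z)" unfolding z_def using infdist_closest[OF X] .
  have gz: "norm (g z) \<le> G" using bd zX by auto
  have exp: "(norm (y - xc))\<^sup>2 = (norm (v - xc))\<^sup>2 - 2*\<alpha>*(g v \<bullet> (v - xc)) + \<alpha>\<^sup>2*(norm (g v))\<^sup>2"
  proof -
    have gen: "(norm (a - t *\<^sub>R b))\<^sup>2 = (norm a)\<^sup>2 - 2*t*(b \<bullet> a) + t\<^sup>2*(norm b)\<^sup>2" for a b :: 'a and t :: real
    proof -
      have "(norm (a - t *\<^sub>R b))\<^sup>2 = (a - t *\<^sub>R b) \<bullet> (a - t *\<^sub>R b)" by (simp only: power2_norm_eq_inner)
      also have "\<dots> = a \<bullet> a - 2*t*(b \<bullet> a) + t\<^sup>2*(b \<bullet> b)"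
        by (simp add: inner_diff_left inner_diff_right inner_commute[of a b] power2_eq_square algebra_simps)
      also have "\<dots> = (norm a)\<^sup>2 - 2*t*(b \<bullet> a) + t\<^sup>2*(norm b)\<^sup>2" by (simp only: power2_norm_eq_inner)
      finally show ?thesis .
    qed
    have eq: "y - xc = (v - xc) - \<alpha> *\<^sub>R g v" unfolding y_def by simp
    show ?thesis unfolding eq by (rule gen)
  qed
  have c1: "f xc \<ge> f v + g v \<bullet> (xc - v)" by (rule grad_ineq[OF cv gd[rule_format]])
  have c2: "f v \<ge> f z + g z \<bullet> (v - z)" by (rule grad_ineq[OF cv gd[rule_format]])
  have "- (g z \<bullet> (v - z)) \<le> norm (g z) * norm (v - z)"
    using Cauchy_Schwarz_ineq2[of "g z" "v - z"] by linarith
  also have "\<dots> \<le> G * infdist v X" unfolding dz by (rule mult_right_mono[OF gz]) simp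
  finally have c3: "- (g z \<bullet> (v - z)) \<le> G * infdist v X" .
  have "g v \<bullet> (xc - v) = - (g v \<bullet> (v - xc))" by (metis inner_minus_right minus_diff_eq)
  then have c4: "g v \<bullet> (v - xc) \<ge> f z - f xc - G * infdist v X" using c1 c2 c3 by linarith
  have h1: "(norm (y - xc))\<^sup>2 \<le> (norm (v - xc))\<^sup>2 - 2*\<alpha>*(f z - f xc) + 2*\<alpha>*G*infdist v X + \<alpha>\<^sup>2*(norm (g v))\<^sup>2"
  proof -
    have "2*\<alpha>*(f z - f xc - G * infdist v X) \<le> 2*\<alpha>*(g v \<bullet> (v - xc))"
      using c4 a0 by (intro mult_left_mono) auto
    moreover have "2*\<alpha>*(f z - f xc - G * infdist v X) = 2*\<alpha>*(f z - f xc) - 2*\<alpha>*G*infdist v X"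
      by (simp add: right_diff_distrib)
    ultimately show ?thesis unfolding exp by linarith
  qed
  have "norm (g v) \<le> norm (g z) + norm (g v - g z)" by (rule norm_triangle_sub)
  also have "\<dots> \<le> G + L * infdist v X"
  proof -
    have "norm (g v - g z) \<le> L * norm (v - z)" using lip by blast
    then show ?thesis unfolding dz using gz by linarith
  qed
  finally have hn: "norm (g v) \<le> G + L * infdist v X" .
  have dD: "infdist v X \<le> norm (v - xc)" using infdist_le[OF xc, of v] by (simp add: dist_norm)
  have "infdist v X \<le> infdist y X + dist v y" by (rule infdist_triangle)
  moreover have "dist v y = \<alpha> * norm (g v)" unfolding y_def using a0 by (simp add: dist_norm)
  ultimately have ddy: "infdist v X \<le> infdist y X + \<alpha> * norm (g v)" by simp
  have cs': "c \<ge> 1 \<or> (infdist v X = 0 \<and> infdist y X = 0)" using cs by auto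
  have fin: "(norm (y - xc))\<^sup>2 - (infdist y X)\<^sup>2 / c
    \<le> (1 + (8*L\<^sup>2+16*c*L\<^sup>2)*\<alpha>\<^sup>2)*(norm (v - xc))\<^sup>2 - 2*\<alpha>*(f z - f xc)
       - (3/(8*c) - 2*\<alpha>*L)*(infdist v X)\<^sup>2 + (8*c+8)*\<alpha>\<^sup>2*G\<^sup>2"
    by (rule det_bound[OF h1 hn norm_ge_zero[of "g v"] infdist_nonneg[of v X] dD ddy infdist_nonneg[of y X] a0 c0 L0 G0 cs'])
  then show ?thesis unfolding y_def z_def .
qed



theorem lemma9:
  fixes M :: "'b measure" and m b :: nat
    and Ic :: "nat set" and Iset :: "nat \<Rightarrow> nat set" and Xc :: "nat \<Rightarrow> 'a::euclidean_space set"
    and f :: "nat \<Rightarrow> 'a \<Rightarrow> real" and gf :: "nat \<Rightarrow> 'a \<Rightarrow> 'a"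
    and L Gf c :: real
    and W :: "nat \<Rightarrow> nat \<Rightarrow> nat \<Rightarrow> real" and \<alpha> :: "nat \<Rightarrow> real"
    and x :: "nat \<Rightarrow> nat \<Rightarrow> 'b \<Rightarrow> 'a"
    and Om :: "nat \<Rightarrow> nat \<Rightarrow> nat \<Rightarrow> 'b \<Rightarrow> nat"
  defines "X \<equiv> \<Inter>i\<in>{..<m}. \<Inter>j\<in>Iset i. Xc j"
    and "v \<equiv> \<lambda>k i \<omega>. \<Sum>j<m. W k i j *\<^sub>R x k j \<omega>"
    and "F \<equiv> Ftil M m b (x 0) Om"
    and "A \<equiv> 8 * L\<^sup>2 + 16 * c * L\<^sup>2"
    and "B \<equiv> 8 * c + 8"
  assumes M: "prob_space M"
    and fin_I: "finite Ic"
    and part_sub: "\<forall>i<m. Iset i \<subseteq> Ic"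
    and part_cover: "(\<Union>i<m. Iset i) = Ic"
    and part_disj: "\<forall>i<m. \<forall>i'<m. i \<noteq> i' \<longrightarrow> Iset i \<inter> Iset i' = {}"
    and X_ne: "X \<noteq> {}"
    and Xc_closed: "\<forall>j\<in>Ic. closed (Xc j)"
    and Xc_convex: "\<forall>j\<in>Ic. convex (Xc j)"
    and f_convex: "\<forall>i<m. convex_on UNIV (f i)"
    and f_grad: "\<forall>i<m. \<forall>y. (f i has_derivative (\<lambda>h. gf i y \<bullet> h)) (at y)"
    and grad_lip: "\<forall>i<m. \<forall>y z. norm (gf i y - gf i z) \<le> L * norm (y - z)"
    and grad_bd: "\<forall>i<m. \<forall>y\<in>X. norm (gf i y) \<le> Gf"
    and c_pos: "c > 0"
    and A3: "\<forall>i<m. \<forall>k. \<forall>r\<in>{1..b}. \<forall>y.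
               infdist y X ^ 2 \<le> c * (\<integral>\<omega>. infdist y (Xc (Om i k r \<omega>)) ^ 2 \<partial>M)"
    and step_pos: "\<forall>k. \<alpha> k > 0"
    and b_pos: "b \<ge> 1"
    and x0_meas: "\<forall>i<m. x 0 i \<in> borel_measurable M"
    and Om_meas: "\<forall>i<m. \<forall>k. \<forall>r\<in>{1..b}. Om i k r \<in> measurable M (count_space UNIV)"
    and Om_range: "\<forall>i<m. \<forall>k. \<forall>r\<in>{1..b}. \<forall>\<omega>\<in>space M. Om i k r \<omega> \<in> Iset i"
    and Om_distr: "\<forall>i<m. \<forall>k. \<forall>r\<in>{1..b}.
               distr M (count_space UNIV) (Om i k r) = distr M (count_space UNIV) (Om i 0 1)"
    and Om_indep: "\<forall>i<m. \<forall>k. prob_space.indep_sets M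
               (\<lambda>t. case t of None \<Rightarrow> sets (F k)
                             | Some r \<Rightarrow> {Om i k r -` S \<inter> space M | S. True})
               (insert None (Some ` {1..b}))"
    and x_step: "\<forall>k. \<forall>i<m. \<forall>\<omega>\<in>space M.
               x (Suc k) i \<omega> = batch_proj Xc (\<lambda>r. Om i k r \<omega>) b
                                   (v k i \<omega> - \<alpha> k *\<^sub>R gf i (v k i \<omega>))"
  shows "\<forall>xc\<in>X. \<forall>i<m. \<forall>k. AE \<omega> in M.
           real_cond_exp M (F k) (\<lambda>\<omega>. (norm (x (Suc k) i \<omega> - xc))\<^sup>2) \<omega>
             \<le> (1 + A * (\<alpha> k)\<^sup>2) * (norm (v k i \<omega> - xc))\<^sup>2
                - 2 * \<alpha> k * (f i (closest_point X (v k i \<omega>)) - f i xc)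
                - (3 / (8 * c) - 2 * \<alpha> k * L) * (infdist (v k i \<omega>) X)\<^sup>2
                + B * (\<alpha> k)\<^sup>2 * Gf\<^sup>2"
proof (intro ballI allI impI)
  fix xc i k assume xc: "xc \<in> X" and i: "i < m"
  interpret P: prob_space M by (rule M)
  have XsubXc: "X \<subseteq> Xc j" if "i' < m" "j \<in> Iset i'" for i' j
    using that unfolding X_def by blast
  have Icc: "\<forall>n\<in>Ic. convex (Xc n) \<and> closed (Xc n) \<and> Xc n \<noteq> {}"
  proof
    fix n assume n: "n \<in> Ic"
    then obtain i' where "i' < m" "n \<in> Iset i'" using part_cover by blast
    then have "X \<subseteq> Xc n" by (rule XsubXc)
    then show "convex (Xc n) \<and> closed (Xc n) \<and> Xc n \<noteq> {}" using n Xc_closed Xc_convex X_ne by auto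
  qed
  have Xcl: "closed X" unfolding X_def
    by (intro closed_INT) (use part_sub Xc_closed in blast)
  have L0: "0 \<le> L"
  proof -
    define e :: 'a where "e = (SOME i. i \<in> Basis)"
    have e: "e \<in> Basis" unfolding e_def by (rule SOME_Basis)
    have "0 \<le> norm (gf i e - gf i 0)" by simp
    also have "\<dots> \<le> L * norm (e - 0)" using grad_lip i by blast
    finally show ?thesis using e by simp
  qed
  obtain x1 where x1: "x1 \<in> X" using X_ne by blast
  have G0: "0 \<le> Gf" using grad_bd i x1 by (meson norm_ge_zero order_trans)
  have gm: "gf j \<in> borel_measurable borel" if "j < m" for j
  proof -
    have "L-lipschitz_on UNIV (gf j)"
      by (rule lipschitz_onI) (use grad_lip that L0 in \<open>auto simp: dist_norm\<close>)
    then have "continuous_on UNIV (gf j)" by (rule lipschitz_on_continuous_on)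
    then show ?thesis by (rule borel_measurable_continuous_onI)
  qed
  have Fsub: "subalgebra M (F k')" for k'
    unfolding F_def by (rule Ftil_sub[OF x0_meas Om_meas])
  have Fnest: "subalgebra (F (Suc k')) (F k')" for k'
    unfolding F_def by (rule Ftil_nest[OF x0_meas Om_meas]) simp
  have FOm: "Om j k' r \<in> measurable (F (Suc k')) (count_space UNIV)" if "j < m" "r \<in> {1..b}" for j k' r
    unfolding F_def by (rule Ftil_Om[OF x0_meas Om_meas]) (use that in auto)
  have spF: "space (F k') = space M" for k' unfolding F_def by (rule space_Ftil)
  have vm: "v k' j \<in> borel_measurable N"
    if "\<forall>l<m. x k' l \<in> borel_measurable N" for k' j N
    unfolding v_def
    by (intro borel_measurable_sum borel_measurable_scaleR measurable_const) (use that in auto)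
  have ym: "(\<lambda>\<omega>. v k' j \<omega> - \<alpha> k' *\<^sub>R gf j (v k' j \<omega>)) \<in> borel_measurable N"
    if "\<forall>l<m. x k' l \<in> borel_measurable N" "j < m" for k' j N
  proof -
    have a: "v k' j \<in> borel_measurable N" using vm that(1) .
    have "(\<lambda>\<omega>. gf j (v k' j \<omega>)) \<in> borel_measurable N"
      using measurable_compose[OF a gm[OF that(2)]] .
    then show ?thesis using a by (intro borel_measurable_diff borel_measurable_scaleR measurable_const) auto
  qed
  have xm: "\<forall>j<m. x k' j \<in> borel_measurable (F k')" for k'
  proof (induction k')
    case 0
    show ?case unfolding F_def using Ftil_x0[OF x0_meas Om_meas] by blast
  next
    case (Suc k')
    show ?case
    proof (intro allI impI)
      fix j assume j: "j < m"
      have "\<forall>l<m. x k' l \<in> borel_measurable (F (Suc k'))"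
        using Suc measurable_from_subalg[OF Fnest] by blast
      from ym[OF this j]
      have yy: "(\<lambda>\<omega>. v k' j \<omega> - \<alpha> k' *\<^sub>R gf j (v k' j \<omega>)) \<in> borel_measurable (F (Suc k'))" .
      have wm: "\<forall>r\<in>{1..b}. Om j k' r \<in> measurable (F (Suc k')) (count_space UNIV)"
        using FOm j by blast
      have wr: "\<forall>r\<in>{1..b}. \<forall>\<omega>\<in>space (F (Suc k')). Om j k' r \<omega> \<in> Ic"
        using Om_range part_sub j unfolding spF by blast
      have "(\<lambda>\<omega>. batch_proj Xc (\<lambda>r. Om j k' r \<omega>) b (v k' j \<omega> - \<alpha> k' *\<^sub>R gf j (v k' j \<omega>)))
              \<in> borel_measurable (F (Suc k'))"
        by (rule batch_proj_meas[OF Icc wm wr yy]) simp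
      moreover have "\<And>\<omega>. \<omega> \<in> space (F (Suc k')) \<Longrightarrow> batch_proj Xc (\<lambda>r. Om j k' r \<omega>) b (v k' j \<omega> - \<alpha> k' *\<^sub>R gf j (v k' j \<omega>)) = x (Suc k') j \<omega>"
        using x_step j unfolding spF by simp
      ultimately show "x (Suc k') j \<in> borel_measurable (F (Suc k'))"
        using measurable_cong by (metis (no_types, lifting))
    qed
  qed
  have fms: "finite_measure_subalgebra M (F k)"
    unfolding finite_measure_subalgebra_def finite_measure_subalgebra_axioms_def
    using M[unfolded prob_space_def] Fsub by blast
  interpret S: sigma_finite_subalgebra M "F k" by (rule finite_measure_subalgebra_is_sigma_finite[OF fms])

  define y where "y = (\<lambda>\<omega>. v k i \<omega> - \<alpha> k *\<^sub>R gf i (v k i \<omega>))"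
  have yF: "y \<in> borel_measurable (F k)" unfolding y_def by (rule ym[OF xm i])
  have yM: "y \<in> borel_measurable M" by (rule measurable_from_subalg[OF Fsub yF])
  have b1: "1 \<in> {1..b}" using b_pos by simp
  have Om1m: "Om i k 1 \<in> measurable M (count_space UNIV)" using Om_meas i b1 by blast
  define E where "E = (\<lambda>j. Om i k 1 -` {j} \<inter> space M)"
  have EM: "E j \<in> sets M" for j unfolding E_def by (rule measurable_sets[OF Om1m]) simp
  define q where "q = (\<lambda>j u. (infdist u (Xc j))\<^sup>2)"
  define p where "p = (\<lambda>j. measure M (E j))"
  define T where "T = (\<lambda>u. \<Sum>j\<in>Iset i. q j u * p j)"
  define Pf where "Pf = (\<lambda>\<omega>. (norm (y \<omega> - xc))\<^sup>2)"
  define \<Phi> where "\<Phi> = (\<lambda>\<omega>. (norm (x (Suc k) i \<omega> - xc))\<^sup>2)"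
  have finI: "finite (Iset i)" using part_sub i fin_I finite_subset by blast
  have Om1r: "Om i k 1 \<omega> \<in> Iset i" if "\<omega> \<in> space M" for \<omega> using Om_range i b1 that by blast

  have key1: "\<Phi> \<omega> + q (Om i k 1 \<omega>) (y \<omega>) \<le> Pf \<omega>" if w: "\<omega> \<in> space M" for \<omega>
  proof -
    have cond: "convex (Xc (Om i k s \<omega>)) \<and> closed (Xc (Om i k s \<omega>)) \<and> xc \<in> Xc (Om i k s \<omega>)"
      if s: "s \<in> {1..b}" for s
    proof -
      have "Om i k s \<omega> \<in> Iset i" using Om_range i s w by blast
      then show ?thesis using Icc part_sub i XsubXc[OF i] xc by blast
    qed
    have "(norm (batch_proj Xc (\<lambda>r. Om i k r \<omega>) b (y \<omega>) - xc))\<^sup>2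
          \<le> (norm (y \<omega> - xc))\<^sup>2 - (infdist (y \<omega>) (Xc (Om i k 1 \<omega>)))\<^sup>2"
      by (rule batch_bound[OF b_pos]) (use cond in auto)
    moreover have "x (Suc k) i \<omega> = batch_proj Xc (\<lambda>r. Om i k r \<omega>) b (y \<omega>)"
      using x_step i w unfolding y_def by simp
    ultimately show ?thesis unfolding \<Phi>_def Pf_def q_def by simp
  qed
  have indE: "indicator (E j) \<omega> = (if j = Om i k 1 \<omega> then 1 else 0)" if "\<omega> \<in> space M" for j \<omega>
    using that unfolding E_def by (auto simp: indicator_def)
  have sumind: "(\<Sum>j\<in>Iset i. ennreal (q j (y \<omega>)) * indicator (E j) \<omega>) = ennreal (q (Om i k 1 \<omega>) (y \<omega>))"
    if w: "\<omega> \<in> space M" for \<omega>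
  proof -
    have "(\<Sum>j\<in>Iset i. ennreal (q j (y \<omega>)) * indicator (E j) \<omega>)
        = (\<Sum>j\<in>Iset i. if j = Om i k 1 \<omega> then ennreal (q j (y \<omega>)) else 0)"
      by (rule sum.cong) (auto simp: indE[OF w])
    also have "\<dots> = ennreal (q (Om i k 1 \<omega>) (y \<omega>))" using finI Om1r[OF w] by simp
    finally show ?thesis .
  qed
  have sumindR: "(\<Sum>j\<in>Iset i. q j u * indicator (E j) \<omega>) = q (Om i k 1 \<omega>) u"
    if w: "\<omega> \<in> space M" for \<omega> and u :: 'a
  proof -
    have "(\<Sum>j\<in>Iset i. q j u * indicator (E j) \<omega>)
        = (\<Sum>j\<in>Iset i. if j = Om i k 1 \<omega> then q j u else 0)"
      by (rule sum.cong) (auto simp: indE[OF w])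
    also have "\<dots> = q (Om i k 1 \<omega>) u" using finI Om1r[OF w] by simp
    finally show ?thesis .
  qed

  have repr: "(\<integral>\<omega>. (infdist u (Xc (Om i k 1 \<omega>)))\<^sup>2 \<partial>M) = T u" for u
  proof -
    have "(\<integral>\<omega>. (infdist u (Xc (Om i k 1 \<omega>)))\<^sup>2 \<partial>M) = (\<integral>\<omega>. (\<Sum>j\<in>Iset i. q j u * indicator (E j) \<omega>) \<partial>M)"
      by (rule Bochner_Integration.integral_cong) (use sumindR in \<open>auto simp: q_def\<close>)
    also have "\<dots> = (\<Sum>j\<in>Iset i. (\<integral>\<omega>. q j u * indicator (E j) \<omega> \<partial>M))"
    proof (rule Bochner_Integration.integral_sum)
      fix j
      have "integrable M (indicator (E j) :: 'b \<Rightarrow> real)"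
        using EM by (intro integrable_real_indicator) (auto simp: less_top[symmetric])
      then show "integrable M (\<lambda>\<omega>. q j u * indicator (E j) \<omega>)" by (rule integrable_mult_right)
    qed
    also have "\<dots> = T u"
    proof -
      have "E j \<inter> space M = E j" for j unfolding E_def by auto
      then show ?thesis unfolding T_def p_def by simp
    qed
    finally show ?thesis .
  qed
  have Tnn: "0 \<le> T u" for u unfolding T_def p_def q_def by (intro sum_nonneg) simp
  have T_lb: "(infdist u X)\<^sup>2 \<le> c * T u" for u
    using A3 i b1 repr by metis
  have sump: "(\<Sum>j\<in>Iset i. p j) \<le> 1"
  proof -
    have "(\<Sum>j\<in>Iset i. p j) = measure M (\<Union>j\<in>Iset i. E j)"
      unfolding p_def
      by (rule P.finite_measure_finite_Union[symmetric]) (simp add: finI, use EM in blast, auto simp: disjoint_family_on_def E_def)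
    then show ?thesis by simp
  qed
  have T_ub: "T u \<le> (infdist u X)\<^sup>2" for u
  proof -
    have "T u \<le> (\<Sum>j\<in>Iset i. (infdist u X)\<^sup>2 * p j)"
      unfolding T_def
    proof (rule sum_mono)
      fix j assume j: "j \<in> Iset i"
      have "infdist u (Xc j) \<le> infdist u X" by (rule infdist_mono[OF XsubXc[OF i j] X_ne])
      then have "q j u \<le> (infdist u X)\<^sup>2" unfolding q_def by (simp add: power_mono infdist_nonneg)
      then show "q j u * p j \<le> (infdist u X)\<^sup>2 * p j" unfolding p_def by (simp add: mult_right_mono)
    qed
    also have "\<dots> = (infdist u X)\<^sup>2 * (\<Sum>j\<in>Iset i. p j)" by (simp add: sum_distrib_left)
    also have "\<dots> \<le> (infdist u X)\<^sup>2" using sump by (simp add: mult_left_le)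
    finally show ?thesis .
  qed
  have cs: "c \<ge> 1 \<or> (\<forall>u. infdist u X = 0)"
  proof (cases "c \<ge> 1")
    case False
    have "infdist u X = 0" for u
    proof -
      have "(infdist u X)\<^sup>2 \<le> c * (infdist u X)\<^sup>2"
        using T_lb[of u] T_ub[of u] c_pos by (smt (verit) mult_left_mono)
      then have "(1 - c) * (infdist u X)\<^sup>2 \<le> 0" by (simp add: algebra_simps)
      then have "(infdist u X)\<^sup>2 \<le> 0" using False by (simp add: mult_le_0_iff)
      then show ?thesis by simp
    qed
    then show ?thesis by blast
  qed simp

  have xSm: "x (Suc k) i \<in> borel_measurable M"
    using measurable_from_subalg[OF Fsub] xm i by blast
  have Phim: "(\<lambda>\<omega>. ennreal (\<Phi> \<omega>)) \<in> borel_measurable M"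
  proof -
    have "(\<lambda>u. (norm (u - xc))\<^sup>2) \<in> borel_measurable borel"
      by (intro borel_measurable_continuous_onI continuous_intros)
    from measurable_compose[OF measurable_compose[OF xSm this] measurable_ennreal]
    show ?thesis unfolding \<Phi>_def by simp
  qed
  have qb: "(\<lambda>u. q j u) \<in> borel_measurable borel" for j
    unfolding q_def by (intro borel_measurable_continuous_onI continuous_intros)
  have qF: "(\<lambda>\<omega>. ennreal (q j (y \<omega>))) \<in> borel_measurable (F k)" for j
    using measurable_compose[OF measurable_compose[OF yF qb] measurable_ennreal] by simp
  have qM: "(\<lambda>\<omega>. ennreal (q j (y \<omega>))) \<in> borel_measurable M" for j
    by (rule measurable_from_subalg[OF Fsub qF])
  have indm: "(indicator (E j) :: 'b \<Rightarrow> ennreal) \<in> borel_measurable M" for j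
    using EM by simp
  have hm: "(\<lambda>\<omega>. ennreal (q j (y \<omega>)) * indicator (E j) \<omega>) \<in> borel_measurable M" for j
    using qM[of j] indm[of j] by measurable
  have summ: "(\<lambda>\<omega>. \<Sum>j\<in>Iset i. ennreal (q j (y \<omega>)) * indicator (E j) \<omega>) \<in> borel_measurable M"
    by (rule borel_measurable_sum) (rule hm)
  have PfF: "(\<lambda>\<omega>. ennreal (Pf \<omega>)) \<in> borel_measurable (F k)"
  proof -
    have "(\<lambda>u. (norm (u - xc))\<^sup>2) \<in> borel_measurable borel"
      by (intro borel_measurable_continuous_onI continuous_intros)
    from measurable_compose[OF measurable_compose[OF yF this] measurable_ennreal]
    show ?thesis unfolding Pf_def by simp
  qed
  have PfM: "(\<lambda>\<omega>. ennreal (Pf \<omega>)) \<in> borel_measurable M" by (rule measurable_from_subalg[OF Fsub PfF])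
  define H where "H = (\<lambda>\<omega>. ennreal (\<Phi> \<omega>) + (\<Sum>j\<in>Iset i. ennreal (q j (y \<omega>)) * indicator (E j) \<omega>))"
  have HP: "AE \<omega> in M. H \<omega> \<le> ennreal (Pf \<omega>)"
  proof (rule AE_I2)
    fix \<omega> assume w: "\<omega> \<in> space M"
    have "H \<omega> = ennreal (\<Phi> \<omega>) + ennreal (q (Om i k 1 \<omega>) (y \<omega>))" unfolding H_def using sumind[OF w] by simp
    also have "\<dots> = ennreal (\<Phi> \<omega> + q (Om i k 1 \<omega>) (y \<omega>))"
      by (rule ennreal_plus[symmetric]) (auto simp: \<Phi>_def q_def)
    also have "\<dots> \<le> ennreal (Pf \<omega>)" using key1[OF w] by (rule ennreal_leI)
    finally show "H \<omega> \<le> ennreal (Pf \<omega>)" .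
  qed
  have Hm: "H \<in> borel_measurable M" unfolding H_def using Phim summ by measurable
  have aa: "AE \<omega> in M. nn_cond_exp M (F k) H \<omega> \<le> nn_cond_exp M (F k) (\<lambda>\<omega>. ennreal (Pf \<omega>)) \<omega>"
    by (rule S.nn_cond_exp_mono[OF HP Hm PfM])
  have bb: "AE \<omega> in M. ennreal (Pf \<omega>) = nn_cond_exp M (F k) (\<lambda>\<omega>. ennreal (Pf \<omega>)) \<omega>"
    by (rule S.nn_cond_exp_F_meas[OF PfF])
  have cc: "AE \<omega> in M. nn_cond_exp M (F k) (\<lambda>\<omega>. ennreal (\<Phi> \<omega>)) \<omega>
      + nn_cond_exp M (F k) (\<lambda>\<omega>. \<Sum>j\<in>Iset i. ennreal (q j (y \<omega>)) * indicator (E j) \<omega>) \<omega>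
      = nn_cond_exp M (F k) H \<omega>"
    unfolding H_def by (rule S.nn_cond_exp_sum[OF Phim summ])
  have dd: "AE \<omega> in M. nn_cond_exp M (F k) (\<lambda>\<omega>. \<Sum>j\<in>Iset i. ennreal (q j (y \<omega>)) * indicator (E j) \<omega>) \<omega>
      = (\<Sum>j\<in>Iset i. nn_cond_exp M (F k) (\<lambda>\<omega>. ennreal (q j (y \<omega>)) * indicator (E j) \<omega>) \<omega>)"
    by (rule S.nn_cond_exp_sum_fin[where h = "\<lambda>j \<omega>. ennreal (q j (y \<omega>)) * indicator (E j) \<omega>", OF finI hm])
  have indep: "\<forall>A\<in>sets (F k). measure M (A \<inter> E j) = measure M A * measure M (E j)" for j
  proof
    fix A assume A: "A \<in> sets (F k)"
    let ?J = "{None, Some (1::nat)}"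
    let ?A = "\<lambda>t. case t of None \<Rightarrow> A | Some _ \<Rightarrow> E j"
    have "P.prob (\<Inter>t\<in>?J. ?A t) = (\<Prod>t\<in>?J. P.prob (?A t))"
      by (rule P.indep_setsD[OF Om_indep[rule_format, OF i, of k]]) (use A b1 in \<open>auto simp: E_def\<close>)
    then show "measure M (A \<inter> E j) = measure M A * measure M (E j)" by simp
  qed
  have ee: "AE \<omega> in M. \<forall>j\<in>Iset i. ennreal (q j (y \<omega>)) * nn_cond_exp M (F k) (indicator (E j)) \<omega>
      = nn_cond_exp M (F k) (\<lambda>\<omega>. ennreal (q j (y \<omega>)) * indicator (E j) \<omega>) \<omega>"
    by (rule AE_finite_allI[OF finI]) (rule S.nn_cond_exp_prod[OF qF indm])
  have ff: "AE \<omega> in M. \<forall>j\<in>Iset i. nn_cond_exp M (F k) (indicator (E j)) \<omega> = ennreal (p j)"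
    by (rule AE_finite_allI[OF finI]) (unfold p_def, rule nn_cond_exp_indep_ind[OF M Fsub EM indep])
  have zero: "AE \<omega> in M. nn_cond_exp M (F k) (\<lambda>\<omega>. ennreal (- \<Phi> \<omega>)) \<omega> = 0"
  proof -
    have "(\<lambda>\<omega>. ennreal (- \<Phi> \<omega>)) = (\<lambda>_. 0)" by (rule ext) (simp add: \<Phi>_def ennreal_neg)
    moreover have "AE \<omega> in M. (\<lambda>_. 0::ennreal) \<omega> = nn_cond_exp M (F k) (\<lambda>_. 0) \<omega>"
      by (rule S.nn_cond_exp_F_meas) simp
    ultimately show ?thesis by auto
  qed
  have main: "AE \<omega> in M. real_cond_exp M (F k) \<Phi> \<omega> \<le> Pf \<omega> - T (y \<omega>)"
    using aa bb cc dd ee ff zero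
  proof eventually_elim
    case (elim \<omega>)
    have "(\<Sum>j\<in>Iset i. nn_cond_exp M (F k) (\<lambda>\<omega>. ennreal (q j (y \<omega>)) * indicator (E j) \<omega>) \<omega>)
        = (\<Sum>j\<in>Iset i. ennreal (q j (y \<omega>) * p j))"
    proof (rule sum.cong)
      fix j assume j: "j \<in> Iset i"
      show "nn_cond_exp M (F k) (\<lambda>\<omega>. ennreal (q j (y \<omega>)) * indicator (E j) \<omega>) \<omega> = ennreal (q j (y \<omega>) * p j)"
        using elim(5) elim(6) j by (simp add: ennreal_mult q_def p_def)
    qed simp
    also have "\<dots> = ennreal (T (y \<omega>))" unfolding T_def
      by (rule sum_ennreal) (simp add: q_def p_def)
    finally have s1: "(\<Sum>j\<in>Iset i. nn_cond_exp M (F k) (\<lambda>\<omega>. ennreal (q j (y \<omega>)) * indicator (E j) \<omega>) \<omega>)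
        = ennreal (T (y \<omega>))" .
    have s2: "nn_cond_exp M (F k) (\<lambda>\<omega>. ennreal (\<Phi> \<omega>)) \<omega> + ennreal (T (y \<omega>)) \<le> ennreal (Pf \<omega>)"
      using elim(1-4) s1 by simp
    have r: "real_cond_exp M (F k) \<Phi> \<omega> = enn2real (nn_cond_exp M (F k) (\<lambda>\<omega>. ennreal (\<Phi> \<omega>)) \<omega>)"
      unfolding real_cond_exp_def using elim(7) by simp
    show ?case unfolding r by (rule enn_aux[OF s2 Tnn]) (simp add: Pf_def)
  qed
  show "AE \<omega> in M.
           real_cond_exp M (F k) (\<lambda>\<omega>. (norm (x (Suc k) i \<omega> - xc))\<^sup>2) \<omega>
             \<le> (1 + A * (\<alpha> k)\<^sup>2) * (norm (v k i \<omega> - xc))\<^sup>2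
                - 2 * \<alpha> k * (f i (closest_point X (v k i \<omega>)) - f i xc)
                - (3 / (8 * c) - 2 * \<alpha> k * L) * (infdist (v k i \<omega>) X)\<^sup>2
                + B * (\<alpha> k)\<^sup>2 * Gf\<^sup>2"
    using main
  proof eventually_elim
    case (elim \<omega>)
    have t: "(infdist (y \<omega>) X)\<^sup>2 / c \<le> T (y \<omega>)"
      using T_lb[of "y \<omega>"] c_pos by (simp add: divide_le_eq mult.commute)
    have dv: "(norm (v k i \<omega> - \<alpha> k *\<^sub>R gf i (v k i \<omega>) - xc))\<^sup>2 - (infdist (v k i \<omega> - \<alpha> k *\<^sub>R gf i (v k i \<omega>)) X)\<^sup>2 / c
      \<le> (1 + (8*L\<^sup>2+16*c*L\<^sup>2)*(\<alpha> k)\<^sup>2)*(norm (v k i \<omega> - xc))\<^sup>2 - 2*(\<alpha> k)*(f i (closest_point X (v k i \<omega>)) - f i xc)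
       - (3/(8*c) - 2*(\<alpha> k)*L)*(infdist (v k i \<omega>) X)\<^sup>2 + (8*c+8)*(\<alpha> k)\<^sup>2*Gf\<^sup>2"
      by (rule det_vec[where X = X]) (use f_convex f_grad grad_lip grad_bd i Xcl X_ne xc step_pos c_pos L0 G0 cs in auto)
    show ?case using elim t dv unfolding A_def B_def \<Phi>_def Pf_def y_def by linarith
  qed
qed


end
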